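(* Let $n\ge2$, $\sigma\ge2$, and let $s$ be a random string of length $n$ with characters i.i.d. uniform over an alphabet of size $\sigma$; let $r$ be its number of maximal runs, $X=r-1$, $q=(2-\sigma)/\sigma$, and $\mathcal{K}(s)$ its peeling kernel. Then $\mathcal{K}(s)$ consists of exactly one distinct symbol iff $r$ is odd iff $X$ is even, and consists of exactly two distinct symbols otherwise. Hence \[\Pr\bigl(|\mathrm{alphabet}(\mathcal{K}(s))|=1\bigr)=\tfrac12\bigl(1+q^{n-1}\bigr),\] which equals $1/2$ exactly when $\sigma=2$, and for $\sigma\ge3$ converges to $1/2$ exponentially fast in $n$.
   Context: A maximal run of a string is a maximal block of consecutive equal symbols. Let $\texttt{@},\texttt{\$}$ be two distinct symbols not in the alphabet. For a string $s$ of length $n$ let $\hat s=\texttt{@}\,s\,\texttt{\$}$ (positions $1,\dots,n+2$); $\hat s[i..j)$ is the substring at positions $i,\dots,j-1$. The leading (trailing) run of a non-empty string is its longest prefix (suffix) consisting of one repeated symbol. The Flashback decomposition $\mathcal{F}(s)$ is the sequence of tokens (pairs $(\sigma,p)$) produced as follows, starting from active span $[lo,hi)=[1,n+3)$: if $lo\ge hi$, stop. Let $\ell$ be the leading-run length of $\hat s[lo..hi)$. If $\ell=hi-lo$, append $(\hat s[lo..hi),0)$ and stop. Otherwise let $\hat s[r'..hi)$ be the trailing run of $\hat s[lo..hi)$ and $\sigma=\hat s[lo..lo+\ell)\cdot\hat s[r'..hi)$; if $lo+\ell\ge r'$, append $(\sigma,0)$ and stop; otherwise append $(\sigma,\ell)$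 and repeat with $[lo+\ell,r')$. The peeling kernel $\mathcal{K}(s)$ is the symbol string of the last token of $\mathcal{F}(s)$, and $\mathrm{alphabet}(w)$ is the set of symbols occurring in $w$. *)

theory Defs
  imports Complex_Main
begin

datatype 'a hsym = At | Dollar | Ch 'a

definition hat :: "'a list \<Rightarrow> 'a hsym list" where
  "hat s = At # map Ch s @ [Dollar]"

definition lead_run :: "'a list \<Rightarrow> nat" where
  "lead_run w = length (takeWhile (\<lambda>x. x = hd w) w)"

definition trail_run :: "'a list \<Rightarrow> nat" where
  "trail_run w = lead_run (rev w)"

lemma lead_run_pos: "w \<noteq> [] \<Longrightarrow> 0 < lead_run w"
  by (cases w) (auto simp: lead_run_def)

text \<open>Flashback decomposition, applied to the active span itself
  (the active span is the substring \<open>hat s[lo..hi)\<close>); the recursive call is on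
  the substring \<open>[lo+l, r')\<close>.\<close>
function flashback :: "'a list \<Rightarrow> ('a list \<times> nat) list" where
  "flashback w =
    (if w = [] then []
     else let l = lead_run w in
       if l = length w then [(w, 0)]
       else let t = trail_run w; r = length w - t;
                sig = take l w @ drop r w in
         if l \<ge> r then [(sig, 0)]
         else (sig, l) # flashback (take (r - l) (drop l w)))"
  by pat_completeness auto
termination
  by (relation "measure length") (auto simp: lead_run_pos)

definition flashback_decomp :: "'a list \<Rightarrow> ('a hsym list \<times> nat) list" where
  "flashback_decomp s = flashback (hat s)"

definition peeling_kernel :: "'a list \<Rightarrow> 'a hsym list" where
  "peeling_kernel s = fst (last (flashback_decomp s))"

definition num_runs :: "'a list \<Rightarrow> nat" where
  "num_runs s = length (remdups_adj s)"

definition strings :: "nat \<Rightarrow> nat \<Rightarrow> nat list set" where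
  "strings n \<sigma> = {s. length s = n \<and> set s \<subseteq> {0..<\<sigma>}}"

definition prob_one_sym :: "nat \<Rightarrow> nat \<Rightarrow> real" where
  "prob_one_sym n \<sigma> =
     real (card {s \<in> strings n \<sigma>. card (set (peeling_kernel s)) = 1}) / real (card (strings n \<sigma>))"

end

theory Submission
  imports Defs
begin


lemma lead_decomp:
  assumes "w \<noteq> []"
  shows "\<exists>v. w = replicate (lead_run w) (hd w) @ v \<and> (v = [] \<or> hd v \<noteq> hd w)"
proof -
  let ?P = "\<lambda>x. x = hd w"
  have "\<forall>y\<in>set (takeWhile ?P w). y = hd w"
    by (auto dest: set_takeWhileD)
  then have 1: "takeWhile ?P w = replicate (lead_run w) (hd w)"
    unfolding lead_run_def by (simp add: replicate_length_same)
  have 2: "dropWhile ?P w = [] \<or> hd (dropWhile ?P w) \<noteq> hd w"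
    using hd_dropWhile[of ?P w] by blast
  have "w = takeWhile ?P w @ dropWhile ?P w" by simp
  then show ?thesis using 1 2 by metis
qed



lemma trail_decomp:
  assumes "w \<noteq> []"
  shows "\<exists>u. w = u @ replicate (trail_run w) (last w) \<and> (u = [] \<or> last u \<noteq> last w)"
proof -
  obtain v where v: "rev w = replicate (lead_run (rev w)) (hd (rev w)) @ v" "v = [] \<or> hd v \<noteq> hd (rev w)"
    using lead_decomp[of "rev w"] assms by auto
  have "w = rev (rev w)" by simp
  also have "\<dots> = rev v @ replicate (trail_run w) (last w)"
    by (subst v(1)) (simp add: trail_run_def hd_rev)
  finally have "w = rev v @ replicate (trail_run w) (last w)" .
  moreover have "rev v = [] \<or> last (rev v) \<noteq> last w"
    using v(2) by (auto simp add: hd_rev last_rev)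
  ultimately show ?thesis by blast
qed

lemma runs_rep_app:
  assumes "m \<noteq> []" "hd m \<noteq> a" "0 < l"
  shows "length (remdups_adj (replicate l a @ m)) = Suc (length (remdups_adj m))"
  using assms(3)
proof (induction l)
  case 0 then show ?case by simp
next
  case (Suc l)
  show ?case
  proof (cases l)
    case 0
    then show ?thesis using assms(1,2) by (cases m) auto
  next
    case (Suc k)
    have "remdups_adj (replicate (Suc l) a @ m) = remdups_adj (replicate l a @ m)"
      unfolding Suc by simp
    then show ?thesis using Suc.IH Suc by simp
  qed
qed

lemma runs_app_rep:
  assumes "m \<noteq> []" "last m \<noteq> b" "0 < t"
  shows "length (remdups_adj (m @ replicate t b)) = Suc (length (remdups_adj m))"
proof -
  have "length (remdups_adj (m @ replicate t b)) = length (remdups_adj (rev (m @ replicate t b)))"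
    by (metis length_rev remdups_adj_rev)
  also have "rev (m @ replicate t b) = replicate t b @ rev m" by simp
  also have "length (remdups_adj (replicate t b @ rev m)) = Suc (length (remdups_adj (rev m)))"
    using runs_rep_app[of "rev m" b t] assms by (simp add: hd_rev)
  finally show ?thesis by (metis length_rev remdups_adj_rev)
qed



lemma kernel_main:
  "w \<noteq> [] \<Longrightarrow> flashback w \<noteq> [] \<and>
     card (set (fst (last (flashback w)))) = (if odd (length (remdups_adj w)) then 1 else 2)"
proof (induction "length w" arbitrary: w rule: less_induct)
  case less
  define a where "a = hd w"
  define l where "l = lead_run w"
  define b where "b = last w"
  define t where "t = trail_run w"
  obtain v where v: "w = replicate l a @ v" "v = [] \<or> hd v \<noteq> a"
    using lead_decomp[OF less.prems] unfolding a_def l_def by blast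
  obtain u where u: "w = u @ replicate t b" "u = [] \<or> last u \<noteq> b"
    using trail_decomp[OF less.prems] unfolding b_def t_def by blast
  have lpos: "0 < l" unfolding l_def using lead_run_pos[OF less.prems] .
  have tpos: "0 < t" unfolding t_def trail_run_def using lead_run_pos[of "rev w"] less.prems by simp
  have lenv: "length w = l + length v" using v(1) by (metis length_append length_replicate)
  have lenu: "length w = length u + t" using u(1) by (metis length_append length_replicate)
  show ?case
  proof (cases "l = length w")
    case True
    then have vn: "v = []" using lenv by simp
    have fw: "flashback w = [(w, 0)]"
      using True less.prems by (subst flashback.simps) (simp add: l_def)
    have "set w = {a}" using v(1) vn lpos by simp
    moreover have "remdups_adj w = [a]" using v(1) vn lpos by (simp add: remdups_adj_replicate)
    ultimately show ?thesis using fw by simp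
  next
    case False
    then have vne: "v \<noteq> []" and hv: "hd v \<noteq> a" using lenv v(2) by auto
    have r: "length w - t = length u" using lenu by simp
    show ?thesis
    proof (cases "l \<ge> length u")
      case True
      have "l = length u"
      proof (rule ccontr)
        assume "l \<noteq> length u"
        then have lt: "length u < l" using True by simp
        have "w ! length u = b" using u(1) tpos by (simp add: nth_append)
        moreover have "w ! length u = a" using v(1) lt by (simp add: nth_append)
        moreover have "v = drop l w" using v(1) by simp
        then have "v = drop (l - length u) (drop (length u) w)" using lt by simp
        then have "set v \<subseteq> set (drop (length u) w)" by (metis set_drop_subset)
        then have "set v \<subseteq> {b}" using u(1) by auto
        then have "hd v = b" using vne by (metis hd_in_set singletonD subsetD)
        ultimately show False using hv by simp
      qed
      then have uv: "u = replicate l a" "v = replicate t b"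
        using v(1) u(1) by (simp_all add: append_eq_append_conv)
      then have ab: "a \<noteq> b" using hv tpos by (cases t) auto
      have fw: "flashback w = [(w, 0)]"
        using False True less.prems \<open>l = length u\<close> r
        apply (subst flashback.simps)
        apply (simp add: Let_def flip: l_def t_def)
        done
      have "set w = {a, b}" using v(1) uv lpos tpos by auto
      moreover have "length (remdups_adj w) = 2"
        using runs_rep_app[of v a l] v(1) vne hv lpos uv tpos by (simp add: remdups_adj_replicate)
      ultimately show ?thesis using fw ab by simp
    next
      case lt: False
      define m where "m = take (length u - l) (drop l w)"
      have dv: "drop l w = v" using v(1) by simp
      have du: "drop (length u) w = replicate t b" using u(1) by simp
      have vm: "v = m @ replicate t b"
      proof -
        have "v = take (length u - l) v @ drop (length u - l) v" by simp
        moreover have "drop (length u - l) v = replicate t b"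
        proof -
          have "drop (length u - l) v = drop (length u - l) (drop l w)" using dv by simp
          also have "\<dots> = drop (length u) w" using lt by simp
          finally show ?thesis using du by simp
        qed
        ultimately show ?thesis using dv m_def by simp
      qed
      have "length m = length u - l" unfolding m_def using lt lenu by simp
      then have mne: "m \<noteq> []" using lt by auto
      have hm: "hd m \<noteq> a" using vm mne hv by simp
      have "m = drop l (take (length u) w)" unfolding m_def using lt by (simp add: take_drop)
      then have "m = drop l u" using u(1) by simp
      moreover have "l < length u" using lt by simp
      ultimately have lm: "last m \<noteq> b" using u(2) by (auto simp: last_drop)
      have lenm: "length m < length w" using mne lenv vm lpos by simp
      have fw: "flashback w = (take l w @ drop (length u) w, l) # flashback m"
        using False lt less.prems r
        apply (subst flashback.simps)
        apply (simp add: Let_def m_def flip: l_def t_def)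
        done
      have IH: "flashback m \<noteq> [] \<and> card (set (fst (last (flashback m)))) =
          (if odd (length (remdups_adj m)) then 1 else 2)"
        using less.hyps[OF lenm mne] .
      have "length (remdups_adj w) = Suc (Suc (length (remdups_adj m)))"
        using runs_rep_app[of v a l] runs_app_rep[OF mne lm tpos] v(1) vne hv lpos vm by simp
      then show ?thesis using fw IH by simp
    qed
  qed
qed



lemma strings_alt: "strings n \<sigma> = {xs. set xs \<subseteq> {0..<\<sigma>} \<and> length xs = n}"
  unfolding strings_def by auto

lemma finite_strings: "finite (strings n \<sigma>)"
  unfolding strings_alt by (rule finite_lists_length_eq) simp

lemma card_strings: "card (strings n \<sigma>) = \<sigma> ^ n"
  unfolding strings_alt by (subst card_lists_length_eq) simp_all

lemma strings_Suc: "strings (Suc n) \<sigma> = (\<lambda>(c,s). c # s) ` ({0..<\<sigma>} \<times> strings n \<sigma>)"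
proof
  show "strings (Suc n) \<sigma> \<subseteq> (\<lambda>(c,s). c # s) ` ({0..<\<sigma>} \<times> strings n \<sigma>)"
  proof
    fix xs assume "xs \<in> strings (Suc n) \<sigma>"
    then obtain c s where "xs = c # s" "length s = n" "set (c # s) \<subseteq> {0..<\<sigma>}"
      unfolding strings_def by (auto simp: length_Suc_conv)
    then show "xs \<in> (\<lambda>(c,s). c # s) ` ({0..<\<sigma>} \<times> strings n \<sigma>)"
      unfolding strings_def by force
  qed
qed (auto simp: strings_def)

lemma inj_cons: "inj_on (\<lambda>(c,s). c # s) A"
  by (auto simp: inj_on_def)

definition D :: "nat \<Rightarrow> nat \<Rightarrow> real" where
  "D n \<sigma> = (\<Sum>s\<in>strings n \<sigma>. (-1) ^ num_runs s)"

lemma D_Suc_gen: "D (Suc n) \<sigma> = (\<Sum>s\<in>strings n \<sigma>. \<Sum>c\<in>{0..<\<sigma>}. (-1) ^ num_runs (c # s))"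
proof -
  have "D (Suc n) \<sigma> = (\<Sum>p\<in>{0..<\<sigma>} \<times> strings n \<sigma>. (-1) ^ num_runs (case p of (c, s) \<Rightarrow> c # s))"
    unfolding D_def strings_Suc by (subst sum.reindex[OF inj_cons]) (simp add: o_def)
  also have "\<dots> = (\<Sum>c\<in>{0..<\<sigma>}. \<Sum>s\<in>strings n \<sigma>. (-1) ^ num_runs (c # s))"
    by (subst sum.cartesian_product) (simp add: case_prod_beta)
  also have "\<dots> = (\<Sum>s\<in>strings n \<sigma>. \<Sum>c\<in>{0..<\<sigma>}. (-1) ^ num_runs (c # s))"
    by (rule sum.swap)
  finally show ?thesis .
qed

lemma num_runs_cons:
  "num_runs (c # x # xs) = (if c = x then num_runs (x # xs) else Suc (num_runs (x # xs)))"
  unfolding num_runs_def by simp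

lemma inner_sum:
  assumes "x < \<sigma>"
  shows "(\<Sum>c\<in>{0..<\<sigma>}. ((-1::real) ^ num_runs (c # x # xs))) = (2 - real \<sigma>) * (-1) ^ num_runs (x # xs)"
proof -
  define r :: real where "r = (-1) ^ num_runs (x # xs)"
  have "(\<Sum>c\<in>{0..<\<sigma>}. ((-1::real) ^ num_runs (c # x # xs)))
      = (\<Sum>c\<in>{0..<\<sigma>}. (- r) + (if c = x then 2 * r else 0))"
    by (rule sum.cong) (auto simp: num_runs_cons r_def)
  also have "\<dots> = (\<Sum>c\<in>{0..<\<sigma>}. - r) + (\<Sum>c\<in>{0..<\<sigma>}. if c = x then 2 * r else 0)"
    by (rule sum.distrib)
  also have "\<dots> = - real \<sigma> * r + 2 * r"
    using assms by simp
  finally show ?thesis unfolding r_def by (simp add: algebra_simps)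
qed

lemma D_Suc: "n \<ge> 1 \<Longrightarrow> D (Suc n) \<sigma> = (2 - real \<sigma>) * D n \<sigma>"
proof -
  assume n: "n \<ge> 1"
  have "D (Suc n) \<sigma> = (\<Sum>s\<in>strings n \<sigma>. (2 - real \<sigma>) * (-1) ^ num_runs s)"
    unfolding D_Suc_gen
  proof (rule sum.cong[OF refl])
    fix s assume s: "s \<in> strings n \<sigma>"
    then obtain x xs where "s = x # xs" using n unfolding strings_def by (cases s) auto
    moreover have "x < \<sigma>" using s calculation unfolding strings_def by auto
    ultimately show "(\<Sum>c\<in>{0..<\<sigma>}. (-1) ^ num_runs (c # s)) = (2 - real \<sigma>) * (-1) ^ num_runs s"
      using inner_sum by simp
  qed
  then show ?thesis unfolding D_def by (simp add: sum_distrib_left)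
qed

lemma D_1: "D (Suc 0) \<sigma> = - real \<sigma>"
proof -
  have "strings 0 \<sigma> = {[]}" unfolding strings_def by auto
  then show ?thesis unfolding D_Suc_gen by (simp add: num_runs_def)
qed

lemma D_formula: "n \<ge> 1 \<Longrightarrow> D n \<sigma> = - real \<sigma> * (2 - real \<sigma>) ^ (n - 1)"
proof (induction n rule: dec_induct)
  case base then show ?case using D_1 by simp
next
  case (step n)
  have "D (Suc n) \<sigma> = (2 - real \<sigma>) * (- real \<sigma> * (2 - real \<sigma>) ^ (n - 1))"
    using D_Suc[of n \<sigma>] step by simp
  also have "\<dots> = - real \<sigma> * ((2 - real \<sigma>) ^ Suc (n - 1))" by (simp add: algebra_simps)
  also have "Suc (n - 1) = Suc n - 1" using step by simp
  finally show ?case .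
qed

lemma card_odd:
  assumes "n \<ge> 1"
  shows "real (card {s \<in> strings n \<sigma>. odd (num_runs s)}) = (real \<sigma> ^ n + real \<sigma> * (2 - real \<sigma>) ^ (n - 1)) / 2"
proof -
  have "D n \<sigma> = (\<Sum>s\<in>strings n \<sigma>. 1 - 2 * (if odd (num_runs s) then 1 else 0))"
    unfolding D_def by (rule sum.cong) auto
  also have "\<dots> = real (card (strings n \<sigma>)) - 2 * (\<Sum>s\<in>strings n \<sigma>. (if odd (num_runs s) then 1 else 0))"
    by (simp add: sum_subtractf sum_distrib_left)
  also have "(\<Sum>s\<in>strings n \<sigma>. (if odd (num_runs s) then 1 else 0)) = real (card {s \<in> strings n \<sigma>. odd (num_runs s)})"
    using finite_strings by (simp add: sum.inter_filter[symmetric])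
  finally show ?thesis using D_formula[OF assms] card_strings[of n \<sigma>] by simp
qed



lemma runs_hat: "s \<noteq> [] \<Longrightarrow> length (remdups_adj (hat s)) = num_runs s + 2"
proof -
  assume s: "s \<noteq> []"
  have inj: "inj Ch" by (auto simp: inj_def)
  have "hat s = replicate 1 At @ (map Ch s @ replicate 1 Dollar)" unfolding hat_def by simp
  then have "length (remdups_adj (hat s)) = Suc (length (remdups_adj (map Ch s @ replicate 1 Dollar)))"
    using runs_rep_app[of "map Ch s @ replicate 1 Dollar" At 1] s by (cases s) auto
  also have "length (remdups_adj (map Ch s @ replicate 1 Dollar)) = Suc (length (remdups_adj (map Ch s)))"
    using runs_app_rep[of "map Ch s" Dollar 1] s by (simp add: last_map)
  finally show ?thesis using remdups_adj_map_injective[OF inj, of s] by (simp add: num_runs_def)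
qed

lemma kernel_card: "s \<noteq> [] \<Longrightarrow> card (set (peeling_kernel s)) = (if odd (num_runs s) then 1 else 2)"
  using kernel_main[of "hat s"] runs_hat[of s]
  unfolding peeling_kernel_def flashback_decomp_def by (simp add: hat_def)

lemma prob_formula:
  assumes "n \<ge> 1" "\<sigma> \<ge> 1"
  shows "prob_one_sym n \<sigma> = (1 + ((2 - real \<sigma>) / real \<sigma>) ^ (n - 1)) / 2"
proof -
  have "{s \<in> strings n \<sigma>. card (set (peeling_kernel s)) = 1} = {s \<in> strings n \<sigma>. odd (num_runs s)}"
  proof (rule Collect_cong)
    fix s
    show "(s \<in> strings n \<sigma> \<and> card (set (peeling_kernel s)) = 1) = (s \<in> strings n \<sigma> \<and> odd (num_runs s))"
    proof (cases "s \<in> strings n \<sigma>")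
      case True
      then have "s \<noteq> []" using assms unfolding strings_def by auto
      then show ?thesis using kernel_card[of s] by auto
    qed simp
  qed
  then have "prob_one_sym n \<sigma> = (real \<sigma> ^ n + real \<sigma> * (2 - real \<sigma>) ^ (n - 1)) / 2 / real \<sigma> ^ n"
    by (simp only: prob_one_sym_def card_odd[OF assms(1)] card_strings of_nat_power)
  also have "\<dots> = (1 + ((2 - real \<sigma>) / real \<sigma>) ^ (n - 1)) / 2"
  proof -
    obtain k where k: "n = Suc k" using assms by (cases n) auto
    have "real \<sigma> > 0" using assms by simp
    then show ?thesis unfolding k by (simp add: field_simps power_divide)
  qed
  finally show ?thesis .
qed

theorem corollaryA2:
  fixes \<sigma> :: nat
  assumes "\<sigma> \<ge> 2"
  defines "q \<equiv> (2 - real \<sigma>) / real \<sigma>"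
  shows "(\<forall>n \<ge> 2. \<forall>s \<in> strings n \<sigma>.
            (card (set (peeling_kernel s)) = 1 \<longleftrightarrow> odd (num_runs s)) \<and>
            (odd (num_runs s) \<longleftrightarrow> even (num_runs s - 1)) \<and>
            (\<not> odd (num_runs s) \<longrightarrow> card (set (peeling_kernel s)) = 2))
       \<and> (\<forall>n \<ge> 2. prob_one_sym n \<sigma> = (1 + q ^ (n - 1)) / 2)
       \<and> (\<forall>n \<ge> 2. prob_one_sym n \<sigma> = 1 / 2 \<longleftrightarrow> \<sigma> = 2)
       \<and> (\<sigma> \<ge> 3 \<longrightarrow>
            (\<lambda>n. prob_one_sym n \<sigma>) \<longlonglongrightarrow> 1 / 2 \<and>
            (\<exists>C c. 0 < c \<and> c < 1 \<and> (\<forall>n \<ge> 2. \<bar>prob_one_sym n \<sigma> - 1 / 2\<bar> \<le> C * c ^ n)))"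
proof (intro conjI)
  show "\<forall>n \<ge> 2. \<forall>s \<in> strings n \<sigma>.
            (card (set (peeling_kernel s)) = 1 \<longleftrightarrow> odd (num_runs s)) \<and>
            (odd (num_runs s) \<longleftrightarrow> even (num_runs s - 1)) \<and>
            (\<not> odd (num_runs s) \<longrightarrow> card (set (peeling_kernel s)) = 2)"
  proof (intro allI impI ballI)
    fix n s assume n: "n \<ge> 2" and s: "s \<in> strings n \<sigma>"
    then have sne: "s \<noteq> []" unfolding strings_def by auto
    then have "num_runs s \<ge> 1" unfolding num_runs_def by simp
    then show "(card (set (peeling_kernel s)) = 1 \<longleftrightarrow> odd (num_runs s)) \<and>
            (odd (num_runs s) \<longleftrightarrow> even (num_runs s - 1)) \<and>
            (\<not> odd (num_runs s) \<longrightarrow> card (set (peeling_kernel s)) = 2)"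
      using kernel_card[OF sne] by auto
  qed
  have pf: "\<And>n. n \<ge> 1 \<Longrightarrow> prob_one_sym n \<sigma> = (1 + q ^ (n - 1)) / 2"
    using prob_formula assms(1) unfolding q_def by simp
  then show "\<forall>n \<ge> 2. prob_one_sym n \<sigma> = (1 + q ^ (n - 1)) / 2" by simp
  show "\<forall>n \<ge> 2. prob_one_sym n \<sigma> = 1 / 2 \<longleftrightarrow> \<sigma> = 2"
  proof (intro allI impI)
    fix n :: nat assume n: "n \<ge> 2"
    have "prob_one_sym n \<sigma> = 1 / 2 \<longleftrightarrow> q ^ (n - 1) = 0" using pf[of n] n by auto
    also have "\<dots> \<longleftrightarrow> q = 0" using n by simp
    also have "\<dots> \<longleftrightarrow> \<sigma> = 2" using assms(1) unfolding q_def by auto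
    finally show "prob_one_sym n \<sigma> = 1 / 2 \<longleftrightarrow> \<sigma> = 2" .
  qed
  show "\<sigma> \<ge> 3 \<longrightarrow>
            (\<lambda>n. prob_one_sym n \<sigma>) \<longlonglongrightarrow> 1 / 2 \<and>
            (\<exists>C c. 0 < c \<and> c < 1 \<and> (\<forall>n \<ge> 2. \<bar>prob_one_sym n \<sigma> - 1 / 2\<bar> \<le> C * c ^ n))"
  proof
    assume s3: "\<sigma> \<ge> 3"
    have sp: "real \<sigma> > 0" using s3 by simp
    have qneg: "q < 0" unfolding q_def using s3 sp by (simp add: divide_neg_pos)
    have qgt: "q > -1" unfolding q_def using s3 sp by (simp add: field_simps)
    define c where "c = \<bar>q\<bar>"
    have c0: "0 < c" and c1: "c < 1" using qneg qgt unfolding c_def by auto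
    have bound: "\<bar>prob_one_sym n \<sigma> - 1 / 2\<bar> = (1 / (2 * c)) * c ^ n" if n: "n \<ge> 1" for n
    proof -
      obtain k where k: "n = Suc k" using n by (cases n) auto
      have "prob_one_sym n \<sigma> - 1 / 2 = q ^ k / 2" using pf[OF n] unfolding k by simp
      then have "\<bar>prob_one_sym n \<sigma> - 1 / 2\<bar> = \<bar>q ^ k / 2\<bar>" by (rule arg_cong)
      also have "\<dots> = c ^ k / 2" unfolding c_def by (simp add: power_abs)
      finally have "\<bar>prob_one_sym n \<sigma> - 1 / 2\<bar> = c ^ k / 2" .
      also have "\<dots> = (1 / (2 * c)) * c ^ n" unfolding k using c0 by (simp add: field_simps)
      finally show ?thesis .
    qed
    have lim0: "(\<lambda>n. (1 / (2 * c)) * c ^ n) \<longlonglongrightarrow> 0"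
      using LIMSEQ_power_zero[of c] c0 c1 tendsto_mult_right_zero by auto
    have "(\<lambda>n. prob_one_sym n \<sigma> - 1 / 2) \<longlonglongrightarrow> 0"
    proof (rule tendsto_0_le[OF lim0, where K=1])
      have "norm (prob_one_sym n \<sigma> - 1 / 2) \<le> norm (1 / (2 * c) * c ^ n) * 1" if "n \<ge> 1" for n
        using bound[OF that] c0 by simp
      then show "\<forall>\<^sub>F n in sequentially. norm (prob_one_sym n \<sigma> - 1 / 2) \<le> norm (1 / (2 * c) * c ^ n) * 1"
        unfolding eventually_sequentially by blast
    qed
    then have "(\<lambda>n. prob_one_sym n \<sigma>) \<longlonglongrightarrow> 1 / 2"
      by (simp add: LIM_zero_iff)
    moreover have "\<exists>C c. 0 < c \<and> c < 1 \<and> (\<forall>n \<ge> 2. \<bar>prob_one_sym n \<sigma> - 1 / 2\<bar> \<le> C * c ^ n)"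
      using bound c0 c1 by (intro exI[of _ "1 / (2 * c)"] exI[of _ c]) auto
    ultimately show "(\<lambda>n. prob_one_sym n \<sigma>) \<longlonglongrightarrow> 1 / 2 \<and>
            (\<exists>C c. 0 < c \<and> c < 1 \<and> (\<forall>n \<ge> 2. \<bar>prob_one_sym n \<sigma> - 1 / 2\<bar> \<le> C * c ^ n))" by blast
  qed
qed


end
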